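(* Let $L$ be an oriented, ordered virtual link diagram with affine bilabeling $C$. Let $L_i$ be a component with starting bilabel $(a_1,a_2)$ and weight $n$; put $A=a_1+a_2$. Let $c$ be the first classical crossing met by $L_i$ after its starting point. The crossing $c$ involves components $i$ and $j$, where possibly $j=i$. Let $\iota$ be the index change of $L_i$'s passage through $c$. Let $C'$ be the coloring obtained by moving the starting point of $L_i$ forward just past this passage through $c$, keeping the same starting bilabel. Write $p_{(L,C)}=\sum_{d}\operatorname{sgn}(d)\,t_{o(d)}^{W_C(d)}-\mathrm{writhe}(L)$. Then $p_{(L,C')}$ is obtained from $p_{(L,C)}$ by: - replacing $A$ with $A-\iota$ in every exponent; and - multiplying the monomial corresponding to the crossing $c$ by $t_i^{\,n}$ if $L_i$ passed through the overstrand of $c$, or by $t_j^{-n}$ if $L_i$ passed through the understrand of $c$ (here $j=o(c)$ is the component of the overstrand).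
   Context: **Diagrams.** A virtual link diagram is an oriented planar diagram of ordered closed curves $L_1,\dots,L_n$ (components) with classical and virtual crossings. **Crossing conventions.** Draw a classical crossing with both strands oriented upward. - The bottom-left-to-top-right strand has index change $-1$; the bottom-right-to-top-left strand has index change $+1$. - The crossing is positive ($\operatorname{sgn}=+1$) if the overstrand is the bottom-left-to-top-right strand, and negative otherwise. - Self-crossings have both strands on one component; external crossings have strands on different components. - The weight of $L_i$ is the sum of the index changes of $L_i$ over its passages through external classical crossings. **Affine bilabeling.** - Each component $L_k$ gets a starting point with bilabel $(a^{(k)}_1,a^{(k)}_2)$ of formal integer variables, distinct for different components. - The bilabel is carried along the component in its orientation and is unchanged at virtual crossings. - At a classical crossing with index change $\varepsilon$, the first entry changes by $\varepsilon$ at a self-crossing, and the second entry changes by $\varepsilon$ at an external crossing. - The discrepancy (the component weight, in the second entry) on returning is placed at the starting point. **Weights and polynomial.** Let $|(x,y)|=x+y$. With both strands drawn upward: - if $c$ is positive, $W(c)=|\text{bottom-left}|-|\text{top-left}|$; - if $c$ is negative, $W(c)=|\text{bottom-right}|-|\text{top-right}|$. These are integer linear expressions in the sums $a^{(k)}_1+a^{(k)}_2$. The multi-variable affine index polynomial is $p_{(L,C)}=\sum_c\operatorname{sgn}(c)(t_{o(c)}^{W(c)}-1)$ over classical crossings, where $o(c)$ is the component of the overstrand. *)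

theory Defs
  imports Main
begin

text \<open>
  A virtual link diagram is encoded by its Gauss data (virtual crossings play no
  role: labels are unchanged there).  Components are numbered 0,...,N-1 (ordered).
  For each component k, S k is the list of its passages through classical
  crossings, in the order met when traversing k in its orientation starting from
  its starting point.  A passage is a pair (c, b): crossing c, b = True for the
  overstrand passage, False for the understrand passage.  sg c is the sign of c.
\<close>

type_synonym passage = "nat \<times> bool"
type_synonym gauss = "nat \<Rightarrow> passage list"

definition all_passages :: "nat \<Rightarrow> gauss \<Rightarrow> passage list" where
  "all_passages N S = concat (map S [0..<N])"

definition crossings :: "nat \<Rightarrow> gauss \<Rightarrow> nat set" where
  "crossings N S = {c. (c, True) \<in> set (all_passages N S)}"

definition virtual_link_diagram :: "nat \<Rightarrow> gauss \<Rightarrow> (nat \<Rightarrow> int) \<Rightarrow> bool" where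
  "virtual_link_diagram N S sg \<longleftrightarrow>
     distinct (all_passages N S) \<and>
     (\<forall>c. (c, True) \<in> set (all_passages N S) \<longleftrightarrow> (c, False) \<in> set (all_passages N S)) \<and>
     (\<forall>c \<in> crossings N S. sg c = 1 \<or> sg c = -1)"

definition comp_of :: "nat \<Rightarrow> gauss \<Rightarrow> passage \<Rightarrow> nat" where
  "comp_of N S p = (THE k. k < N \<and> p \<in> set (S k))"

definition pos_of :: "gauss \<Rightarrow> nat \<Rightarrow> passage \<Rightarrow> nat" where
  "pos_of S k p = (THE m. m < length (S k) \<and> S k ! m = p)"

definition over_comp :: "nat \<Rightarrow> gauss \<Rightarrow> nat \<Rightarrow> nat" where
  "over_comp N S c = comp_of N S (c, True)"

definition is_self :: "nat \<Rightarrow> gauss \<Rightarrow> nat \<Rightarrow> bool" where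
  "is_self N S c \<longleftrightarrow> comp_of N S (c, True) = comp_of N S (c, False)"

text \<open>With both strands drawn upward: the bottom-left-to-top-right strand (alpha) is
  the overstrand iff the crossing is positive; the other strand is beta.\<close>
definition alpha_passage :: "(nat \<Rightarrow> int) \<Rightarrow> nat \<Rightarrow> passage" where
  "alpha_passage sg c = (c, sg c = 1)"

definition beta_passage :: "(nat \<Rightarrow> int) \<Rightarrow> nat \<Rightarrow> passage" where
  "beta_passage sg c = (c, sg c \<noteq> 1)"

definition index_change :: "(nat \<Rightarrow> int) \<Rightarrow> passage \<Rightarrow> int" where
  "index_change sg p = (if p = alpha_passage sg (fst p) then -1 else 1)"

text \<open>bilabel on the arc entering the m-th passage of component k
  (starting bilabel (a1 k, a2 k))\<close>
definition label_at :: "nat \<Rightarrow> gauss \<Rightarrow> (nat \<Rightarrow> int) \<Rightarrow> (nat \<Rightarrow> int) \<Rightarrow> (nat \<Rightarrow> int)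
    \<Rightarrow> nat \<Rightarrow> nat \<Rightarrow> int \<times> int" where
  "label_at N S sg a1 a2 k m =
     (a1 k + (\<Sum>l<m. if is_self N S (fst (S k ! l)) then index_change sg (S k ! l) else 0),
      a2 k + (\<Sum>l<m. if is_self N S (fst (S k ! l)) then 0 else index_change sg (S k ! l)))"

definition label_in :: "nat \<Rightarrow> gauss \<Rightarrow> (nat \<Rightarrow> int) \<Rightarrow> (nat \<Rightarrow> int) \<Rightarrow> (nat \<Rightarrow> int)
    \<Rightarrow> passage \<Rightarrow> int \<times> int" where
  "label_in N S sg a1 a2 p =
     label_at N S sg a1 a2 (comp_of N S p) (pos_of S (comp_of N S p) p)"

definition label_out :: "nat \<Rightarrow> gauss \<Rightarrow> (nat \<Rightarrow> int) \<Rightarrow> (nat \<Rightarrow> int) \<Rightarrow> (nat \<Rightarrow> int)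
    \<Rightarrow> passage \<Rightarrow> int \<times> int" where
  "label_out N S sg a1 a2 p =
     label_at N S sg a1 a2 (comp_of N S p) (Suc (pos_of S (comp_of N S p) p))"

definition babs :: "int \<times> int \<Rightarrow> int" where
  "babs x = fst x + snd x"

text \<open>W(c); bottom-left = in(alpha), top-right = out(alpha),
  bottom-right = in(beta), top-left = out(beta)\<close>
definition crossing_weight :: "nat \<Rightarrow> gauss \<Rightarrow> (nat \<Rightarrow> int) \<Rightarrow> (nat \<Rightarrow> int) \<Rightarrow> (nat \<Rightarrow> int)
    \<Rightarrow> nat \<Rightarrow> int" where
  "crossing_weight N S sg a1 a2 c =
     (if sg c = 1
      then babs (label_in N S sg a1 a2 (alpha_passage sg c)) - babs (label_out N S sg a1 a2 (beta_passage sg c))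
      else babs (label_in N S sg a1 a2 (beta_passage sg c)) - babs (label_out N S sg a1 a2 (alpha_passage sg c)))"

definition comp_weight :: "nat \<Rightarrow> gauss \<Rightarrow> (nat \<Rightarrow> int) \<Rightarrow> nat \<Rightarrow> int" where
  "comp_weight N S sg k =
     (\<Sum>l<length (S k). if is_self N S (fst (S k ! l)) then 0 else index_change sg (S k ! l))"

definition writhe :: "nat \<Rightarrow> gauss \<Rightarrow> (nat \<Rightarrow> int) \<Rightarrow> int" where
  "writhe N S sg = (\<Sum>c\<in>crossings N S. sg c)"

text \<open>Laurent polynomials in t_0, t_1, ... are coefficient functions on exponent
  vectors; expv k w is the exponent vector of t_k^w.\<close>
definition expv :: "nat \<Rightarrow> int \<Rightarrow> nat \<Rightarrow> int" where
  "expv k w = (\<lambda>l. if l = k then w else 0)"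

definition affine_index_poly :: "nat \<Rightarrow> gauss \<Rightarrow> (nat \<Rightarrow> int) \<Rightarrow> (nat \<Rightarrow> int) \<Rightarrow> (nat \<Rightarrow> int)
    \<Rightarrow> (nat \<Rightarrow> int) \<Rightarrow> int" where
  "affine_index_poly N S sg a1 a2 =
     (\<lambda>e. \<Sum>c\<in>crossings N S. sg c *
        ((if e = expv (over_comp N S c) (crossing_weight N S sg a1 a2 c) then 1 else 0)
         - (if e = (\<lambda>_. 0) then 1 else 0)))"

end

theory Submission imports Defs begin

lemma ap_Suc: "all_passages (Suc N) S = all_passages N S @ S N"
  by (simp add: all_passages_def)

lemma set_ap: "set (all_passages N S) = (\<Union>k<N. set (S k))"
  by (auto simp: all_passages_def)

lemma dist_ap: "distinct (all_passages N S) \<Longrightarrow> (\<forall>k<N. distinct (S k)) \<and> (\<forall>k<N. \<forall>k'<N. k \<noteq> k' \<longrightarrow> set (S k) \<inter> set (S k') = {})"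
proof (induction N)
  case 0 then show ?case by (simp add: all_passages_def)
next
  case (Suc N)
  then show ?case
    unfolding ap_Suc distinct_append set_ap
    by (auto simp: less_Suc_eq)
qed

lemma comp_of_eq: assumes "distinct (all_passages N S)" "k<N" "p \<in> set (S k)" shows "comp_of N S p = k"
  unfolding comp_of_def
  apply (rule the_equality) using assms dist_ap by blast+

lemma pos_of_eq: assumes "distinct (S k)" "q < length (S k)" shows "pos_of S k (S k ! q) = q"
  unfolding pos_of_def apply (rule the_equality) using assms nth_eq_iff_index_eq by auto

lemma babs_label_at: "babs (label_at N S sg a1 a2 k m) = a1 k + a2 k + (\<Sum>l<m. index_change sg (S k ! l))"
  unfolding label_at_def babs_def by (simp add: sum.distrib[symmetric] if_distrib cong: if_cong)

lemma sum_nth_set: "distinct xs \<Longrightarrow> (\<Sum>l<length xs. f (xs!l)) = (\<Sum>p\<in>set xs. f p)"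
  using sum_list_distinct_conv_sum_set[of xs f] sum_list_sum_nth[of "map f xs"]
  by (simp add: lessThan_atLeast0)

lemma self_sum_zero:
  assumes vld: "virtual_link_diagram N S sg" and i: "i<N"
  shows "(\<Sum>p\<in>set (S i). if is_self N S (fst p) then index_change sg p else 0) = 0"
proof -
  let ?T = "{p\<in>set (S i). is_self N S (fst p)}"
  let ?h = "\<lambda>p. index_change sg p"
  let ?sw = "\<lambda>p::passage. (fst p, \<not> snd p)"
  have D: "distinct (all_passages N S)" and E: "\<forall>c. (c, True) \<in> set (all_passages N S) \<longleftrightarrow> (c, False) \<in> set (all_passages N S)"
    using vld by (auto simp: virtual_link_diagram_def)
  have s1: "(\<Sum>p\<in>set (S i). if is_self N S (fst p) then ?h p else 0) = (\<Sum>p\<in>?T. ?h p)"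
    by (simp add: sum.inter_filter)
  have sub: "?sw ` ?T \<subseteq> ?T"
  proof
    fix q assume "q \<in> ?sw ` ?T"
    then obtain c b where cb: "(c,b) \<in> set (S i)" "is_self N S c" and q: "q = (c, \<not> b)" by force
    have "(c,b) \<in> set (all_passages N S)" using cb i set_ap by blast
    then have "(c, \<not> b) \<in> set (all_passages N S)" using E by (cases b) auto
    then obtain k where k: "k<N" "(c, \<not> b) \<in> set (S k)" using set_ap by blast
    have "comp_of N S (c,b) = i" using comp_of_eq[OF D i cb(1)] .
    moreover have "comp_of N S (c, True) = comp_of N S (c, False)" using cb(2) by (simp add: is_self_def)
    ultimately have "comp_of N S (c, \<not> b) = i" by (cases b) auto
    moreover have "comp_of N S (c, \<not> b) = k" using comp_of_eq[OF D k] .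
    ultimately show "q \<in> ?T" using k cb q by auto
  qed
  have swT: "?sw ` ?T = ?T"
  proof
    show "?T \<subseteq> ?sw ` ?T"
    proof
      fix p assume "p \<in> ?T"
      then have "?sw p \<in> ?T" using sub by blast
      moreover have "p = ?sw (?sw p)" by simp
      ultimately show "p \<in> ?sw ` ?T" by blast
    qed
  qed (rule sub)
  have inj: "inj_on ?sw ?T" by (auto simp: inj_on_def)
  have "(\<Sum>p\<in>?T. ?h p) = (\<Sum>p\<in>?sw ` ?T. ?h p)" using swT by simp
  also have "... = (\<Sum>p\<in>?T. ?h (?sw p))" using inj by (simp add: sum.reindex)
  also have "... = (\<Sum>p\<in>?T. - ?h p)" by (rule sum.cong) (auto simp: index_change_def alpha_passage_def)
  finally show ?thesis using s1 by (simp add: sum_negf)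
qed

lemma total_eq:
  assumes vld: "virtual_link_diagram N S sg" and i: "i<N"
  shows "(\<Sum>l<length (S i). index_change sg (S i ! l)) = comp_weight N S sg i"
proof -
  have D: "distinct (all_passages N S)" using vld by (simp add: virtual_link_diagram_def)
  have dist: "distinct (S i)" using dist_ap[OF D] i by blast
  let ?phi = "\<lambda>p. if is_self N S (fst p) then index_change sg p else 0"
  have "(\<Sum>l<length (S i). index_change sg (S i ! l)) = (\<Sum>l<length (S i). ?phi (S i ! l)) + comp_weight N S sg i"
    unfolding comp_weight_def sum.distrib[symmetric] by (rule sum.cong) auto
  also have "(\<Sum>l<length (S i). ?phi (S i ! l)) = (\<Sum>p\<in>set (S i). ?phi p)"
    by (rule sum_nth_set[OF dist])
  also have "... = 0" by (rule self_sum_zero[OF vld i])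
  finally show ?thesis by simp
qed

lemma comp_of_cong: "(\<And>k. set (S' k) = set (S k)) \<Longrightarrow> comp_of N S' = comp_of N S"
  unfolding comp_of_def by (rule ext) simp

lemma passage_shift:
  assumes vld: "virtual_link_diagram N S sg" and i: "i<N" and ne: "S i \<noteq> []"
    and a: "\<forall>k. a1' k + a2' k = a1 k + a2 k - (if k = i then index_change sg (hd (S i)) else 0)"
    and p: "p \<in> set (all_passages N S)"
    and S': "S' = S(i := rotate1 (S i))"
  shows "babs (label_in N S' sg a1 a2 p) = babs (label_in N S sg a1' a2' p) + (if p = hd (S i) then comp_weight N S sg i else 0)
       \<and> babs (label_out N S' sg a1 a2 p) = babs (label_out N S sg a1' a2' p) + (if p = hd (S i) then comp_weight N S sg i else 0)"
proof -
  have D: "distinct (all_passages N S)" using vld by (simp add: virtual_link_diagram_def)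
  obtain k where k: "k<N" "p \<in> set (S k)" using p set_ap by blast
  have sets: "\<And>k. set (S' k) = set (S k)" using S' by simp
  have co: "comp_of N S' = comp_of N S" by (rule comp_of_cong[OF sets])
  have ck: "comp_of N S p = k" by (rule comp_of_eq[OF D k])
  obtain x0 ys where xs: "S i = x0 # ys" using ne by (cases "S i") auto
  have disti: "distinct (S i)" using dist_ap[OF D] i by blast
  have x0i: "x0 \<in> set (S i)" using xs by simp
  show ?thesis
  proof (cases "k = i")
    case False
    have Sk: "S' k = S k" using S' False by simp
    have "p \<noteq> hd (S i)" using dist_ap[OF D] k i False x0i xs by auto
    moreover have "a1' k + a2' k = a1 k + a2 k" using a False by simp
    moreover have "pos_of S' k = pos_of S k" by (rule ext) (simp add: pos_of_def Sk)
    ultimately show ?thesis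
      unfolding label_in_def label_out_def co ck babs_label_at Sk by simp
  next
    case True
    have Si': "S' i = ys @ [x0]" using S' xs by simp
    have dys: "distinct (ys @ [x0])" using disti xs by auto
    have ai: "a1' i + a2' i = a1 k + a2 k - index_change sg x0" using a True xs by simp
    have tot: "index_change sg x0 + (\<Sum>l<length ys. index_change sg (ys ! l)) = comp_weight N S sg i"
      using total_eq[OF vld i] xs by (simp del: sum.lessThan_Suc add: sum.lessThan_Suc_shift)
    obtain q where q: "q < length (S i)" "S i ! q = p" using k True by (auto simp: in_set_conv_nth)
    show ?thesis
    proof (cases q)
      case 0
      then have px: "p = x0" using q xs by simp
      have p1: "pos_of S i p = 0" using pos_of_eq[of S i 0, OF disti] xs px by simp
      have p2: "pos_of S' i p = length ys" using pos_of_eq[of S' i "length ys"] Si' dys px by simp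
      have s1: "(\<Sum>l<length ys. index_change sg ((ys @ [x0]) ! l)) = (\<Sum>l<length ys. index_change sg (ys ! l))"
        by (rule sum.cong) (auto simp: nth_append)
      show ?thesis
        unfolding label_in_def label_out_def co ck babs_label_at True p1 p2 Si'
        using ai tot s1 px xs True by (simp add: nth_append)
    next
      case (Suc q')
      then have px: "p = ys ! q'" "q' < length ys" using q xs by auto
      have pnx: "p \<noteq> hd (S i)" using disti xs px by auto
      have p1: "pos_of S i p = Suc q'" using pos_of_eq[of S i "Suc q'", OF disti] xs px by simp
      have p2: "pos_of S' i p = q'" using pos_of_eq[of S' i q'] Si' dys px by (simp add: nth_append)
      have s1: "\<And>m. m \<le> length ys \<Longrightarrow> (\<Sum>l<m. index_change sg ((ys @ [x0]) ! l)) = (\<Sum>l<m. index_change sg (ys ! l))"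
        by (rule sum.cong) (auto simp: nth_append)
      have s2: "\<And>m. (\<Sum>l<Suc m. index_change sg (S i ! l)) = index_change sg x0 + (\<Sum>l<m. index_change sg (ys ! l))"
        using xs by (simp del: sum.lessThan_Suc add: sum.lessThan_Suc_shift)
      show ?thesis
        unfolding label_in_def label_out_def co ck babs_label_at True p1 p2 Si'
        using ai s1[of q'] s1[of "Suc q'"] s2[of q'] s2[of "Suc q'"] px pnx True by simp
    qed
  qed
qed

lemma weight_shift:
  assumes vld: "virtual_link_diagram N S sg" and i: "i<N" and ne: "S i \<noteq> []"
    and a: "\<forall>k. a1' k + a2' k = a1 k + a2 k - (if k = i then index_change sg (hd (S i)) else 0)"
    and d: "d \<in> crossings N S"
    and S': "S' = S(i := rotate1 (S i))"
  shows "crossing_weight N S' sg a1 a2 d = crossing_weight N S sg a1' a2' d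
     + (if d = fst (hd (S i)) then (if snd (hd (S i)) then comp_weight N S sg i else - comp_weight N S sg i) else 0)"
proof -
  have E: "\<forall>c. (c, True) \<in> set (all_passages N S) \<longleftrightarrow> (c, False) \<in> set (all_passages N S)"
    using vld by (auto simp: virtual_link_diagram_def)
  have inP: "(d, b) \<in> set (all_passages N S)" for b using d E by (cases b) (auto simp: crossings_def)
  note ps = passage_shift[OF vld i ne a inP S']
  show ?thesis
    unfolding crossing_weight_def alpha_passage_def beta_passage_def
    using ps[of True] ps[of False]
    by (cases "hd (S i)") (auto split: if_splits)
qed

theorem proposition7:
  fixes N :: nat and S :: gauss and sg :: "nat \<Rightarrow> int" and i :: nat
    and a1 a2 a1' a2' :: "nat \<Rightarrow> int"
  assumes "virtual_link_diagram N S sg"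
    and "i < N"
    and "S i \<noteq> []"
    and "\<forall>k. a1' k + a2' k
              = a1 k + a2 k - (if k = i then index_change sg (hd (S i)) else 0)"
  shows "let c = fst (hd (S i));
             n = comp_weight N S sg i;
             j = over_comp N S c;
             S' = S(i := rotate1 (S i));
             mult = (if snd (hd (S i)) then expv i n else expv j (- n))
         in affine_index_poly N S' sg a1 a2 =
            (\<lambda>e. (\<Sum>d\<in>crossings N S. sg d *
                     (if e = (\<lambda>l. expv (over_comp N S d) (crossing_weight N S sg a1' a2' d) l
                                  + (if d = c then mult l else 0))
                      then 1 else 0))
                 - writhe N S sg * (if e = (\<lambda>_. 0) then 1 else 0))"
proof -
  note vld = assms(1) and i = assms(2) and ne = assms(3) and a = assms(4)
  define c where "c = fst (hd (S i))"
  define n where "n = comp_weight N S sg i"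
  define S' where "S' = S(i := rotate1 (S i))"
  define mult where "mult = (if snd (hd (S i)) then expv i n else expv (over_comp N S c) (- n))"
  have D: "distinct (all_passages N S)" using vld by (simp add: virtual_link_diagram_def)
  have sets: "\<And>k. set (S' k) = set (S k)" using S'_def by simp
  have co: "comp_of N S' = comp_of N S" by (rule comp_of_cong[OF sets])
  have oc: "over_comp N S' = over_comp N S" by (simp add: over_comp_def co fun_eq_iff)
  have cr: "crossings N S' = crossings N S" by (simp add: crossings_def set_ap sets)
  have hdi: "hd (S i) \<in> set (S i)" using ne by simp
  have key: "expv (over_comp N S d) (crossing_weight N S' sg a1 a2 d)
           = (\<lambda>l. expv (over_comp N S d) (crossing_weight N S sg a1' a2' d) l + (if d = c then mult l else 0))"
    if d: "d \<in> crossings N S" for d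
  proof (cases "d = c")
    case False
    then show ?thesis using weight_shift[OF vld i ne a d S'_def] c_def by (simp add: fun_eq_iff)
  next
    case True
    show ?thesis
    proof (cases "snd (hd (S i))")
      case T: True
      have "hd (S i) = (c, True)" using T c_def by (cases "hd (S i)") auto
      then have "over_comp N S d = i" using comp_of_eq[OF D i hdi] True by (simp add: over_comp_def)
      then show ?thesis using weight_shift[OF vld i ne a d S'_def] c_def True T
        by (simp add: fun_eq_iff mult_def n_def expv_def)
    next
      case F: False
      show ?thesis using weight_shift[OF vld i ne a d S'_def] c_def True F
        by (simp add: fun_eq_iff mult_def n_def expv_def)
    qed
  qed
  have "affine_index_poly N S' sg a1 a2 = (\<lambda>e. (\<Sum>d\<in>crossings N S. sg d *
                     (if e = (\<lambda>l. expv (over_comp N S d) (crossing_weight N S sg a1' a2' d) l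
                                  + (if d = c then mult l else 0))
                      then 1 else 0))
                 - writhe N S sg * (if e = (\<lambda>_. 0) then 1 else 0))"
  proof
    fix e
    have "affine_index_poly N S' sg a1 a2 e = (\<Sum>d\<in>crossings N S. sg d *
                     (if e = expv (over_comp N S d) (crossing_weight N S' sg a1 a2 d) then 1 else 0))
          - (\<Sum>d\<in>crossings N S. sg d * (if e = (\<lambda>_. 0) then 1 else 0))"
      unfolding affine_index_poly_def cr oc by (simp add: right_diff_distrib sum_subtractf)
    also have "(\<Sum>d\<in>crossings N S. sg d *
                     (if e = expv (over_comp N S d) (crossing_weight N S' sg a1 a2 d) then 1 else 0))
          = (\<Sum>d\<in>crossings N S. sg d *
                     (if e = (\<lambda>l. expv (over_comp N S d) (crossing_weight N S sg a1' a2' d) l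
                                  + (if d = c then mult l else 0)) then 1 else 0))"
      by (rule sum.cong) (simp_all add: key)
    also have "(\<Sum>d\<in>crossings N S. sg d * (if e = (\<lambda>_. 0) then 1 else 0)) = writhe N S sg * (if e = (\<lambda>_. 0) then 1 else 0)"
      by (simp add: writhe_def sum_distrib_right)
    finally show "affine_index_poly N S' sg a1 a2 e = (\<Sum>d\<in>crossings N S. sg d *
                     (if e = (\<lambda>l. expv (over_comp N S d) (crossing_weight N S sg a1' a2' d) l
                                  + (if d = c then mult l else 0))
                      then 1 else 0))
                 - writhe N S sg * (if e = (\<lambda>_. 0) then 1 else 0)" .
  qed
  then show ?thesis unfolding Let_def c_def n_def S'_def mult_def by simp
qed

end
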